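(* Let $\mathsf{A}\subset GL_2(\mathbb{R})$ be such that $\mathsf{A}$ has an invariant unstable multicone $\mathcal{C}$ and $\mathcal{S}(\mathsf{A})$ does not contain parabolic elements. Let $\mathsf{A}_e$ be the collection of all conformal elements of $\mathsf{A}$. Then $A_1F_1\cdots A_nF_n\mathcal{C}\subset\mathcal{C}^o$ for all $n\ge(\#\partial\mathcal{C})^2+1$, all $A_1,\ldots,A_n\in\mathsf{A}\setminus\mathsf{A}_e$, and all $F_1,\ldots,F_n\in\mathcal{F}(\mathsf{A})$.
   Context: $\mathcal{S}(\mathsf{B})$ denotes the semigroup of finite products of elements of $\mathsf{B}$, and $\mathcal{F}(\mathsf{A})=\mathcal{S}(\{|\det A|^{-1/2}A: A\in\mathsf{A}_e\})$. A matrix is conformal if its two eigenvalues have equal absolute value; parabolic if it has only one eigenspace; proximal if it has real eigenvalues of distinct absolute value, with $u(A)$, $s(A)$ the eigenspaces for the eigenvalue of larger/smaller absolute value. $\mathbb{RP}^1$ is the real projective line; a multicone is a proper subset of $\mathbb{RP}^1$ that is a finite union of closed projective intervals; $\mathcal{C}^o$ is its interior and $\partial\mathcal{C}$ its boundary; invariant means $A\mathcal{C}\subset\mathcal{C}$ for all $A\in\mathsf{A}$. $X_u(\mathsf{A})=\overline{\{u(A):A\in\mathcal{S}(\mathsf{A})\text{ proximal}\}}$, $X_s(\mathsf{A})=\overline{\{s(A):A\in\mathcal{S}(\mathsf{A})\text{ proximal}\}}$. A multicone $\mathcal{C}$ is an unstable multicone for $\mathsf{A}$ if $\mathcal{S}(\mathsf{A})$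 contains a proximal element, $\mathcal{C}\cap X_s(\mathsf{A})=\emptyset$, $\partial\mathcal{C}\cap X_u(\mathsf{A})=\emptyset$, and each connected component of $\mathcal{C}$ meets $X_u(\mathsf{A})$. *)

theory Defs
  imports "HOL-Analysis.Analysis"
begin

text \<open>Real 2x2 matrices are elements of type real^2^2.  The real projective
line RP^1 is modelled by angle coordinates: the angle theta (a real number) stands for
the line spanned by dir theta = (cos theta, sin theta); theta and theta + k pi represent
the same point.  Subsets of RP^1 are modelled by their (pi-periodic) preimages in the
reals; the quotient map is a local homeomorphism, so interior, boundary, closure and
(for proper subsets) connected components are computed in the reals.\<close>

definition dir :: "real \<Rightarrow> real^2" where
  "dir \<theta> = vector [cos \<theta>, sin \<theta>]"

definition mtr :: "real^2^2 \<Rightarrow> real" where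
  "mtr A = A$1$1 + A$2$2"

definition pact :: "real^2^2 \<Rightarrow> real set \<Rightarrow> real set" where
  "pact A C = {\<theta>. \<exists>\<phi>\<in>C. \<exists>(t::real). A *v dir \<phi> = scaleR t (dir \<theta>)}"

inductive_set semigrp :: "(real^2^2) set \<Rightarrow> (real^2^2) set" for B where
  base: "A \<in> B \<Longrightarrow> A \<in> semigrp B"
| mult: "A \<in> semigrp B \<Longrightarrow> M \<in> semigrp B \<Longrightarrow> A ** M \<in> semigrp B"

text \<open>Eigenvalues of a 2x2 matrix, with multiplicity, are the roots of
x^2 - tr x + det.\<close>
definition conformal :: "real^2^2 \<Rightarrow> bool" where
  "conformal A \<longleftrightarrow> (\<exists>l m :: complex. l + m = complex_of_real (mtr A)
      \<and> l * m = complex_of_real (det A) \<and> cmod l = cmod m)"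

definition parabolic :: "real^2^2 \<Rightarrow> bool" where
  "parabolic A \<longleftrightarrow> (\<exists>v. v \<noteq> 0 \<and> (\<exists>l. A *v v = l *\<^sub>R v) \<and>
      (\<forall>w. w \<noteq> 0 \<longrightarrow> (\<exists>m. A *v w = m *\<^sub>R w) \<longrightarrow> (\<exists>t. w = t *\<^sub>R v)))"

definition proximal :: "real^2^2 \<Rightarrow> bool" where
  "proximal A \<longleftrightarrow> (\<exists>l m :: real. l + m = mtr A \<and> l * m = det A \<and> \<bar>l\<bar> \<noteq> \<bar>m\<bar>)"

definition uspace :: "real^2^2 \<Rightarrow> real set" where
  "uspace A = {\<theta>. \<exists>l m. l + m = mtr A \<and> l * m = det A \<and> \<bar>l\<bar> > \<bar>m\<bar>
                 \<and> A *v dir \<theta> = l *\<^sub>R dir \<theta>}"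

definition sspace :: "real^2^2 \<Rightarrow> real set" where
  "sspace A = {\<theta>. \<exists>l m. l + m = mtr A \<and> l * m = det A \<and> \<bar>l\<bar> < \<bar>m\<bar>
                 \<and> A *v dir \<theta> = l *\<^sub>R dir \<theta>}"

definition Xu :: "(real^2^2) set \<Rightarrow> real set" where
  "Xu B = closure (\<Union>{uspace A | A. A \<in> semigrp B \<and> proximal A})"

definition Xs :: "(real^2^2) set \<Rightarrow> real set" where
  "Xs B = closure (\<Union>{sspace A | A. A \<in> semigrp B \<and> proximal A})"

definition proj_interval :: "real \<Rightarrow> real \<Rightarrow> real set" where
  "proj_interval a b = {\<theta>. \<exists>k::int. \<theta> + of_int k * pi \<in> {a..b}}"

definition multicone :: "real set \<Rightarrow> bool" where
  "multicone C \<longleftrightarrow> C \<noteq> UNIV \<and> (\<exists>I :: (real \<times> real) set. finite I \<and>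
      (\<forall>(a,b)\<in>I. a < b \<and> b - a < pi) \<and> C = (\<Union>(a,b)\<in>I. proj_interval a b))"

definition invariant :: "(real^2^2) set \<Rightarrow> real set \<Rightarrow> bool" where
  "invariant B C \<longleftrightarrow> (\<forall>A\<in>B. pact A C \<subseteq> C)"

definition unstable_multicone :: "(real^2^2) set \<Rightarrow> real set \<Rightarrow> bool" where
  "unstable_multicone B C \<longleftrightarrow> multicone C \<and> (\<exists>A\<in>semigrp B. proximal A)
     \<and> C \<inter> Xs B = {} \<and> frontier C \<inter> Xu B = {}
     \<and> (\<forall>K\<in>components C. K \<inter> Xu B \<noteq> {})"

text \<open>Number of boundary points of C as a subset of RP^1 (one angle per line).\<close>
definition nbdry :: "real set \<Rightarrow> nat" where
  "nbdry C = card (frontier C \<inter> {0..<pi})"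

definition conformal_part :: "(real^2^2) set \<Rightarrow> (real^2^2) set" where
  "conformal_part B = {A\<in>B. conformal A}"

definition Fset :: "(real^2^2) set \<Rightarrow> (real^2^2) set" where
  "Fset B = semigrp {inverse (sqrt \<bar>det A\<bar>) *\<^sub>R A | A. A \<in> conformal_part B}"

definition alt_prod :: "(real^2^2) list \<Rightarrow> (real^2^2) list \<Rightarrow> real^2^2" where
  "alt_prod As Fs = foldr (\<lambda>(A,F) M. A ** F ** M) (zip As Fs) (mat 1)"

end

theory Submission
  imports Defs
begin

lemma vec2_eq: "(v::real^2) = w \<longleftrightarrow> v$1 = w$1 \<and> v$2 = w$2"
  by (simp add: vec_eq_iff forall_2)

lemma mat2_eq: "(A::real^2^2) = B \<longleftrightarrow> A$1$1 = B$1$1 \<and> A$1$2 = B$1$2 \<and> A$2$1 = B$2$1 \<and> A$2$2 = B$2$2"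
  by (simp add: vec_eq_iff forall_2)

lemma mv_c: "(M *v (x::real^2))$1 = M$1$1 * x$1 + M$1$2 * x$2"
  "(M *v (x::real^2))$2 = M$2$1 * x$1 + M$2$2 * x$2"
  by (simp_all add: matrix_vector_mult_def sum_2)

lemma mm_c: "((A::real^2^2) ** B)$i$j = A$i$1*B$1$j + A$i$2*B$2$j"
  by (simp add: matrix_matrix_mult_def sum_2)

lemma mat_c: "(mat k :: real^2^2)$i$j = (if i = j then k else 0)"
  by (simp add: mat_def)

lemma dir_c[simp]: "dir t $1 = cos t" "dir t $2 = sin t"
  by (simp_all add: dir_def)

lemma dir_nz: "dir t \<noteq> 0"
proof
  assume "dir t = 0"
  then have "cos t = 0" "sin t = 0" by (auto simp: vec2_eq)
  moreover have "(sin t)\<^sup>2 + (cos t)\<^sup>2 = 1" by simp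
  ultimately show False by simp
qed

definition sg :: "int \<Rightarrow> real" where "sg k = (if even k then 1 else -1)"

lemma sg_sq: "sg k * sg k = 1" by (simp add: sg_def)

lemma dir_shift: "dir (a + of_int k * pi) = sg k *\<^sub>R dir a"
proof -
  have "cos (of_int k * pi) = sg k" "sin (of_int k * pi) = 0"
    using cos_npi_int[of k] sin_npi_int[of k] by (simp_all add: sg_def mult.commute)
  then show ?thesis by (simp add: vec2_eq cos_add sin_add)
qed

lemma dir_par: assumes "dir a = s *\<^sub>R dir b" shows "\<exists>k::int. a = b + of_int k * pi"
proof -
  have "cos a = s * cos b" "sin a = s * sin b" using assms by (auto simp: vec2_eq)
  then have "sin (a - b) = 0" by (simp add: sin_diff)
  then obtain i::int where "a - b = of_int i * pi" using sin_zero_iff_int2 by blast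
  then show ?thesis by (intro exI[of _ i]) simp
qed

definition mto :: "real^2^2 \<Rightarrow> real \<Rightarrow> real \<Rightarrow> bool" where
  "mto M a b \<longleftrightarrow> (\<exists>t. M *v dir a = t *\<^sub>R dir b)"

lemma pact_mto: "pact M C = {b. \<exists>a\<in>C. mto M a b}"
  by (auto simp: pact_def mto_def)

lemma mto_shiftR: "mto M a (b + of_int k * pi) \<longleftrightarrow> mto M a b"
proof
  assume "mto M a (b + of_int k * pi)"
  then obtain t where "M *v dir a = t *\<^sub>R dir (b + of_int k * pi)" by (auto simp: mto_def)
  then have "M *v dir a = (t * sg k) *\<^sub>R dir b" by (simp add: dir_shift)
  then show "mto M a b" by (auto simp: mto_def)
next
  assume "mto M a b"
  then obtain t where "M *v dir a = t *\<^sub>R dir b" by (auto simp: mto_def)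
  moreover have "dir b = sg k *\<^sub>R dir (b + of_int k * pi)"
    by (simp add: dir_shift sg_sq)
  ultimately have "M *v dir a = (t * sg k) *\<^sub>R dir (b + of_int k * pi)" by simp
  then show "mto M a (b + of_int k * pi)" by (auto simp: mto_def)
qed

lemma mto_shiftL: "mto M (a + of_int k * pi) b \<longleftrightarrow> mto M a b"
proof -
  have "M *v dir (a + of_int k * pi) = sg k *\<^sub>R (M *v dir a)"
    by (simp add: dir_shift matrix_vector_mult_scaleR)
  moreover have "M *v dir a = sg k *\<^sub>R (M *v dir (a + of_int k * pi))"
    by (simp add: dir_shift matrix_vector_mult_scaleR sg_sq)
  ultimately show ?thesis unfolding mto_def
    by (metis scaleR_scaleR)
qed

definition rn :: "real \<Rightarrow> real" where "rn t = t + of_int (- \<lfloor>t / pi\<rfloor>) * pi"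

lemma floor_norm: "a \<le> t + of_int (- \<lfloor>(t - a) / pi\<rfloor>) * pi \<and> t + of_int (- \<lfloor>(t - a) / pi\<rfloor>) * pi < a + pi"
proof -
  define y where "y = (t - a) / pi"
  have ty: "t - a = y * pi" using pi_gt_zero by (simp add: y_def)
  have "of_int \<lfloor>y\<rfloor> \<le> y" "y < of_int \<lfloor>y\<rfloor> + 1" by linarith+
  then have "of_int \<lfloor>y\<rfloor> * pi \<le> y * pi" "y * pi < (of_int \<lfloor>y\<rfloor> + 1) * pi"
    using pi_gt_zero by (simp_all add: mult_right_mono)
  then show ?thesis unfolding y_def[symmetric] using ty by (simp add: algebra_simps)
qed

lemma rn_range: "0 \<le> rn t" "rn t < pi"
  using floor_norm[of 0 t] by (simp_all add: rn_def)

lemma int_pi_ge: "(m::int) \<ge> 1 \<Longrightarrow> of_int m * pi \<ge> pi"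
  using pi_gt_zero by (simp add: mult_right_mono[of 1 "of_int m" pi, simplified])

lemma int_pi_le: "(m::int) \<le> -1 \<Longrightarrow> of_int m * pi \<le> - pi"
  using int_pi_ge[of "-m"] by simp

lemma norm_unique:
  assumes "a \<le> t + of_int k * pi" "t + of_int k * pi < a + pi"
    "a \<le> t + of_int j * pi" "t + of_int j * pi < a + pi"
  shows "k = j"
proof (rule ccontr)
  assume "k \<noteq> j"
  then have "k - j \<ge> 1 \<or> k - j \<le> -1" by linarith
  then show False
  proof
    assume "k - j \<ge> 1"
    then have "of_int (k - j) * pi \<ge> pi" by (rule int_pi_ge)
    then show False using assms by (simp add: algebra_simps)
  next
    assume "k - j \<le> -1"
    then have "of_int (k - j) * pi \<le> - pi" by (rule int_pi_le)
    then show False using assms by (simp add: algebra_simps)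
  qed
qed

lemma mto_rn: "mto M (rn a) (rn b) \<longleftrightarrow> mto M a b"
  unfolding rn_def by (simp only: mto_shiftL mto_shiftR)

definition per :: "real set \<Rightarrow> bool" where
  "per C \<longleftrightarrow> (\<forall>x k. x \<in> C \<longrightarrow> x + of_int (k::int) * pi \<in> C)"

lemma per_iff: "per C \<Longrightarrow> x + of_int k * pi \<in> C \<longleftrightarrow> x \<in> C"
  unfolding per_def
  by (metis add_diff_cancel_right' diff_conv_add_uminus minus_mult_left of_int_minus)

lemma per_interior: assumes "per C" shows "per (interior C)"
  unfolding per_def
proof (intro allI impI)
  fix x and k :: int
  assume "x \<in> interior C"
  then obtain e where e: "e > 0" "ball x e \<subseteq> C" by (auto simp: mem_interior)
  have "ball (x + of_int k * pi) e \<subseteq> C"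
  proof
    fix y assume "y \<in> ball (x + of_int k * pi) e"
    then have "y + of_int (-k) * pi \<in> ball x e" by (simp add: dist_real_def)
    then have "y + of_int (-k) * pi \<in> C" using e by blast
    then show "y \<in> C" using per_iff[OF assms] by blast
  qed
  then show "x + of_int k * pi \<in> interior C" using e by (auto simp: mem_interior)
qed

lemma per_frontier: assumes "per C" "closed C" shows "per (frontier C)"
  using assms per_interior[OF assms(1)] unfolding per_def
  by (auto simp: frontier_def closure_closed per_iff[OF per_interior[OF assms(1)]])

lemma rn_frontier: assumes "per C" "closed C" "y \<in> frontier C"
  shows "rn y \<in> frontier C \<inter> {0..<pi}"
proof -
  have "rn y \<in> frontier C" using per_frontier[OF assms(1,2)] assms(3) unfolding per_def rn_def by blast
  then show ?thesis using rn_range[of y] by auto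
qed

lemma per_PI: "per (proj_interval a b)"
  unfolding per_def
proof (intro allI impI)
  fix x and k :: int
  assume "x \<in> proj_interval a b"
  then obtain j :: int where "x + of_int j * pi \<in> {a..b}" by (auto simp: proj_interval_def)
  then have "x + of_int k * pi + of_int (j - k) * pi \<in> {a..b}"
    by (simp add: algebra_simps)
  then show "x + of_int k * pi \<in> proj_interval a b" unfolding proj_interval_def by blast
qed

lemma open_compl_PI: assumes "a < b" "b - a < pi" shows "open (- proj_interval a b)"
  unfolding open_contains_ball
proof
  fix t assume t: "t \<in> - proj_interval a b"
  define k where "k = - \<lfloor>(t - a) / pi\<rfloor>"
  define t' where "t' = t + of_int k * pi"
  have r: "a \<le> t'" "t' < a + pi" using floor_norm[of a t] by (simp_all add: t'_def k_def)
  have "t' \<notin> {a..b}" using t by (auto simp: proj_interval_def t'_def)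
  then have bt: "b < t'" using r by auto
  define e where "e = min (t' - b) (a + pi - t')"
  have e: "e > 0" using bt r by (simp add: e_def)
  have "ball t e \<subseteq> - proj_interval a b"
  proof
    fix x assume "x \<in> ball t e"
    then have x: "b < x + of_int k * pi" "x + of_int k * pi < a + pi"
      by (auto simp: dist_real_def e_def t'_def)
    show "x \<in> - proj_interval a b"
    proof
      assume "x \<in> proj_interval a b"
      then obtain j :: int where j: "x + of_int j * pi \<in> {a..b}" by (auto simp: proj_interval_def)
      have eq: "x + of_int j * pi = x + of_int k * pi + of_int (j - k) * pi" by (simp add: algebra_simps)
      consider "j - k \<ge> 1" | "j - k \<le> -1" | "j = k" by linarith
      then show False
      proof cases
        case 1 then have "of_int (j - k) * pi \<ge> pi" by (rule int_pi_ge)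
        then show False using j x eq pi_gt_zero by (simp only: atLeastAtMost_iff) linarith
      next
        case 2 then have "of_int (j - k) * pi \<le> - pi" by (rule int_pi_le)
        then show False using j x eq by (simp only: atLeastAtMost_iff) linarith
      next
        case 3 then show False using j x by auto
      qed
    qed
  qed
  then show "\<exists>e>0. ball t e \<subseteq> - proj_interval a b" using e by blast
qed

lemma closed_PI: "a < b \<Longrightarrow> b - a < pi \<Longrightarrow> closed (proj_interval a b)"
  using open_compl_PI closed_open by blast

lemma interior_PI: assumes "t + of_int k * pi \<in> {a<..<b}" shows "t \<in> interior (proj_interval a b)"
proof -
  define e where "e = min (t + of_int k * pi - a) (b - t - of_int k * pi)"
  have e: "e > 0" using assms by (simp add: e_def)
  have "ball t e \<subseteq> proj_interval a b"
  proof
    fix x assume "x \<in> ball t e"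
    then have "x + of_int k * pi \<in> {a..b}" by (auto simp: dist_real_def e_def)
    then show "x \<in> proj_interval a b" by (auto simp: proj_interval_def)
  qed
  then show ?thesis using e by (auto simp: mem_interior)
qed

lemma multicone_props:
  assumes "multicone C"
  shows "per C" "closed C" "finite (frontier C \<inter> {0..<pi})"
proof -
  obtain I where I: "finite I" "\<forall>(a,b)\<in>I. a < b \<and> b - a < pi"
    "C = (\<Union>(a,b)\<in>I. proj_interval a b)" using assms by (auto simp: multicone_def)
  show "per C" unfolding per_def I(3)
    using per_PI unfolding per_def by blast
  show cl: "closed C" unfolding I(3)
    using I(1,2) by (intro closed_UN) (auto intro: closed_PI)
  have "frontier C \<inter> {0..<pi} \<subseteq> (\<Union>(a,b)\<in>I. {rn a, rn b})"
  proof
    fix t assume t: "t \<in> frontier C \<inter> {0..<pi}"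
    then have "t \<in> C" using cl by (auto simp: frontier_def closure_closed)
    then obtain a b where ab: "(a,b) \<in> I" "t \<in> proj_interval a b" using I(3) by auto
    then obtain k :: int where k: "t + of_int k * pi \<in> {a..b}" by (auto simp: proj_interval_def)
    have tni: "t \<notin> interior C" using t by (auto simp: frontier_def)
    have "t + of_int k * pi \<notin> {a<..<b}"
    proof
      assume "t + of_int k * pi \<in> {a<..<b}"
      then have "t \<in> interior (proj_interval a b)" by (rule interior_PI)
      moreover have "proj_interval a b \<subseteq> C" using I(3) ab(1) by auto
      ultimately show False using tni interior_mono by blast
    qed
    then have "t + of_int k * pi = a \<or> t + of_int k * pi = b" using k by auto
    moreover have "\<And>c. t + of_int k * pi = c \<Longrightarrow> t = rn c"
    proof -
      fix c assume c: "t + of_int k * pi = c"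
      have "t = c + of_int (-k) * pi" using c by simp
      moreover have "-k = - \<lfloor>c / pi\<rfloor>"
        using norm_unique[of 0 c "-k" "- \<lfloor>c / pi\<rfloor>"] floor_norm[of 0 c] t c by auto
      ultimately show "t = rn c" by (simp add: rn_def)
    qed
    ultimately show "t \<in> (\<Union>(a,b)\<in>I. {rn a, rn b})" using ab(1) by blast
  qed
  moreover have "finite (\<Union>(a,b)\<in>I. {rn a, rn b})" using I(1) by auto
  ultimately show "finite (frontier C \<inter> {0..<pi})" using finite_subset by blast
qed

lemma polar: assumes "(v::real^2) \<noteq> 0" shows "\<exists>s b. s \<noteq> 0 \<and> v = s *\<^sub>R dir b"
proof -
  define z where "z = Complex (v$1) (v$2)"
  have "z \<noteq> 0" using assms by (auto simp: z_def vec2_eq complex_eq_iff)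
  have "rcis (cmod z) (Arg z) = z" by (rule rcis_cmod_Arg)
  then have "cmod z * cos (Arg z) = v$1" "cmod z * sin (Arg z) = v$2"
    by (metis Re_rcis complex.sel(1) z_def, metis Im_rcis complex.sel(2) z_def)
  then have "v = cmod z *\<^sub>R dir (Arg z)" by (simp add: vec2_eq)
  moreover have "cmod z \<noteq> 0" using \<open>z \<noteq> 0\<close> by simp
  ultimately show ?thesis by blast
qed

lemma inv_mv_nz: assumes "invertible M" "x \<noteq> 0" shows "M *v x \<noteq> 0"
proof
  assume h: "M *v x = 0"
  obtain N where "N ** M = mat 1" using assms(1) by (auto simp: invertible_def)
  then have "x = N *v (M *v x)" by (simp add: matrix_vector_mul_assoc)
  then show False using h assms(2) by simp
qed

lemma mto_ex: assumes "invertible M" shows "\<exists>b. mto M a b"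
proof -
  have "M *v dir a \<noteq> 0" using inv_mv_nz[OF assms dir_nz] .
  then obtain s b where "M *v dir a = s *\<^sub>R dir b" using polar by blast
  then show ?thesis by (auto simp: mto_def)
qed

lemma mto_unique: assumes "invertible M" "mto M a b" "mto M a b'"
  shows "\<exists>k::int. b' = b + of_int k * pi"
proof -
  obtain t t' where t: "M *v dir a = t *\<^sub>R dir b" "M *v dir a = t' *\<^sub>R dir b'"
    using assms(2,3) by (auto simp: mto_def)
  have nz: "M *v dir a \<noteq> 0" using inv_mv_nz[OF assms(1) dir_nz] .
  then have "t' \<noteq> 0" using t by auto
  then have "dir b' = (t / t') *\<^sub>R dir b" using t
    by (metis (no_types, lifting) divide_inverse_commute scaleR_scaleR right_inverse scaleR_one)
  then show ?thesis using dir_par by blast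
qed

lemma mto_comp: "mto N a b \<Longrightarrow> mto M b c \<Longrightarrow> mto (M ** N) a c"
  unfolding mto_def
  by (metis matrix_vector_mul_assoc matrix_vector_mult_scaleR scaleR_scaleR)

lemma mto_decomp: assumes "invertible N" "mto (M ** N) a c" shows "\<exists>b. mto N a b \<and> mto M b c"
proof -
  have "N *v dir a \<noteq> 0" using inv_mv_nz[OF assms(1) dir_nz] .
  then obtain s b where sb: "s \<noteq> 0" "N *v dir a = s *\<^sub>R dir b" using polar by blast
  obtain t where t: "(M ** N) *v dir a = t *\<^sub>R dir c" using assms(2) by (auto simp: mto_def)
  have "(M ** N) *v dir a = s *\<^sub>R (M *v dir b)"
    by (simp add: sb(2) matrix_vector_mul_assoc[symmetric] matrix_vector_mult_scaleR)
  then have "M *v dir b = (t / s) *\<^sub>R dir c" using t sb(1)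
    by (metis (no_types, lifting) divide_inverse_commute scaleR_scaleR right_inverse scaleR_one)
  then show ?thesis using sb by (auto simp: mto_def)
qed

lemma mto_scale: assumes "c \<noteq> 0" shows "mto (c *\<^sub>R M) a b \<longleftrightarrow> mto M a b"
proof -
  have e: "(c *\<^sub>R M) *v x = c *\<^sub>R (M *v x)" for x
    by (simp add: scaleR_matrix_vector_assoc)
  show ?thesis unfolding mto_def e
  proof
    assume "\<exists>t. c *\<^sub>R (M *v dir a) = t *\<^sub>R dir b"
    then obtain t where "c *\<^sub>R (M *v dir a) = t *\<^sub>R dir b" by blast
    then have "M *v dir a = (t / c) *\<^sub>R dir b" using assms
      by (metis (no_types, lifting) divide_inverse_commute scaleR_scaleR left_inverse scaleR_one)
    then show "\<exists>t. M *v dir a = t *\<^sub>R dir b" by blast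
  next
    assume "\<exists>t. M *v dir a = t *\<^sub>R dir b"
    then show "\<exists>t. c *\<^sub>R (M *v dir a) = t *\<^sub>R dir b" by auto
  qed
qed

lemma mto_mat1: "mto (mat 1) a b \<longleftrightarrow> (\<exists>k::int. b = a + of_int k * pi)"
proof
  assume "mto (mat 1) a b"
  then obtain t where t: "dir a = t *\<^sub>R dir b" by (auto simp: mto_def)
  then have "t \<noteq> 0" using dir_nz by auto
  then have "dir b = (1/t) *\<^sub>R dir a" using t by simp
  then show "\<exists>k::int. b = a + of_int k * pi" using dir_par by blast
next
  assume "\<exists>k::int. b = a + of_int k * pi"
  then obtain k :: int where "b = a + of_int k * pi" by blast
  then show "mto (mat 1) a b" using mto_shiftR[of "mat 1" a a k]
    by (auto simp: mto_def intro: exI[of _ 1])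
qed

lemma mto_refl1: "mto (mat 1) a a"
  using mto_mat1[of a a] by (metis add_0_right mult_zero_left of_int_0)

lemma pact_scalar: assumes "per C" "s \<noteq> 0" shows "pact (s *\<^sub>R mat 1) C = C"
proof -
  have "pact (s *\<^sub>R mat 1) C = pact (mat 1) C" by (simp add: pact_mto mto_scale[OF assms(2)])
  also have "\<dots> = C"
  proof
    show "pact (mat 1) C \<subseteq> C"
      using per_iff[OF assms(1)] by (auto simp: pact_mto mto_mat1)
    show "C \<subseteq> pact (mat 1) C" using mto_refl1 by (auto simp: pact_mto)
  qed
  finally show ?thesis .
qed

lemma inv_mto: assumes "M ** N = mat 1" "N ** M = mat 1" "mto M a b" shows "mto N b a"
proof -
  obtain s where s: "M *v dir a = s *\<^sub>R dir b" using assms(3) by (auto simp: mto_def)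
  have "dir a = N *v (M *v dir a)" using assms(2) by (simp add: matrix_vector_mul_assoc)
  also have "\<dots> = s *\<^sub>R (N *v dir b)" by (simp add: s matrix_vector_mult_scaleR)
  finally have e: "dir a = s *\<^sub>R (N *v dir b)" .
  then have "s \<noteq> 0" using dir_nz by auto
  then have "N *v dir b = (1/s) *\<^sub>R dir a" using e by simp
  then show ?thesis by (auto simp: mto_def)
qed

lemma pact_sub_comp: assumes "invertible Y" "pact X C \<subseteq> C" "pact Y C \<subseteq> C"
  shows "pact (X ** Y) C \<subseteq> C"
proof
  fix c assume "c \<in> pact (X ** Y) C"
  then obtain a where a: "a \<in> C" "mto (X ** Y) a c" by (auto simp: pact_mto)
  then obtain b where "mto Y a b" "mto X b c" using mto_decomp[OF assms(1)] by blast
  then show "c \<in> C" using a assms(2,3) by (auto simp: pact_mto)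
qed

text \<open>Openness of the projective action.\<close>
lemma interior_pres:
  assumes inv: "invertible M" and sub: "pact M C \<subseteq> C" and a: "a \<in> interior C" and ab: "mto M a b"
  shows "b \<in> interior C"
proof -
  obtain N where N: "M ** N = mat 1" "N ** M = mat 1" using inv by (auto simp: invertible_def)
  obtain t where t: "M *v dir a = t *\<^sub>R dir b" using ab by (auto simp: mto_def)
  have Nb: "N *v dir b = (1/t) *\<^sub>R dir a" and tnz: "t \<noteq> 0"
  proof -
    have "dir a = N *v (M *v dir a)" using N(2) by (simp add: matrix_vector_mul_assoc)
    also have "\<dots> = t *\<^sub>R (N *v dir b)" by (simp add: t matrix_vector_mult_scaleR)
    finally have e: "dir a = t *\<^sub>R (N *v dir b)" .
    then show "t \<noteq> 0" using dir_nz by auto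
    then show "N *v dir b = (1/t) *\<^sub>R dir a" using e by simp
  qed
  define v1 where "v1 \<phi> = N$1$1 * cos \<phi> + N$1$2 * sin \<phi>" for \<phi>
  define v2 where "v2 \<phi> = N$2$1 * cos \<phi> + N$2$2 * sin \<phi>" for \<phi>
  have Nv: "N *v dir \<phi> = vector [v1 \<phi>, v2 \<phi>]" for \<phi>
    by (simp add: vec2_eq mv_c v1_def v2_def)
  define d where "d \<phi> = cos a * v1 \<phi> + sin a * v2 \<phi>" for \<phi>
  define c where "c \<phi> = cos a * v2 \<phi> - sin a * v1 \<phi>" for \<phi>
  define f where "f \<phi> = a + arctan (c \<phi> / d \<phi>)" for \<phi>
  have vb: "v1 b = cos a / t" "v2 b = sin a / t"
    using Nb by (auto simp: vec2_eq Nv)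
  have sc: "(cos a)\<^sup>2 + (sin a)\<^sup>2 = 1" by simp
  have db: "d b = 1 / t" unfolding d_def vb using sc
    by (simp add: power2_eq_square add_divide_distrib[symmetric])
  have cb: "c b = 0" unfolding c_def vb by (simp add: field_simps)
  have fb: "f b = a" by (simp add: f_def cb)
  have dbnz: "d b \<noteq> 0" using db tnz by simp
  have cont_d: "isCont d b" unfolding d_def v1_def v2_def by (intro continuous_intros)
  have cont_c: "isCont c b" unfolding c_def v1_def v2_def by (intro continuous_intros)
  have cont_f: "isCont f b" unfolding f_def
    using cont_c cont_d dbnz by (intro continuous_intros) auto
  obtain e where e: "e > 0" "ball a e \<subseteq> C" using a by (auto simp: mem_interior)
  obtain \<delta>1 where d1: "\<delta>1 > 0" "\<forall>x. dist x b < \<delta>1 \<longrightarrow> dist (f x) (f b) < e"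
    using cont_f e(1) unfolding continuous_at_eps_delta by blast
  obtain \<delta>2 where d2: "\<delta>2 > 0" "\<forall>x. dist x b < \<delta>2 \<longrightarrow> dist (d x) (d b) < \<bar>d b\<bar>"
    using cont_d dbnz unfolding continuous_at_eps_delta by (meson zero_less_abs_iff)
  have "ball b (min \<delta>1 \<delta>2) \<subseteq> C"
  proof
    fix \<phi> assume "\<phi> \<in> ball b (min \<delta>1 \<delta>2)"
    then have dist: "dist \<phi> b < \<delta>1" "dist \<phi> b < \<delta>2" by (auto simp: dist_commute)
    have dnz: "d \<phi> \<noteq> 0"
    proof
      assume h: "d \<phi> = 0"
      have "dist (d \<phi>) (d b) < \<bar>d b\<bar>" using d2(2) dist(2) by blast
      then show False unfolding h dist_real_def by simp
    qed
    have fin: "f \<phi> \<in> C" using d1(2) dist(1) e(2) fb by (auto simp: dist_commute)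
    define q where "q = c \<phi> / d \<phi>"
    define r where "r = sqrt (1 + q\<^sup>2)"
    have rpos: "r > 0" unfolding r_def by (simp add: add_pos_nonneg)
    have id1: "v1 \<phi> = d \<phi> * cos a - c \<phi> * sin a"
    proof -
      have "d \<phi> * cos a - c \<phi> * sin a = (cos a * cos a + sin a * sin a) * v1 \<phi>"
        unfolding d_def c_def by (simp add: algebra_simps del: sin_cos_squared_add3 sin_cos_squared_add2 sin_cos_squared_add)
      then show ?thesis by simp
    qed
    have id2: "v2 \<phi> = d \<phi> * sin a + c \<phi> * cos a"
    proof -
      have "d \<phi> * sin a + c \<phi> * cos a = (cos a * cos a + sin a * sin a) * v2 \<phi>"
        unfolding d_def c_def by (simp add: algebra_simps del: sin_cos_squared_add3 sin_cos_squared_add2 sin_cos_squared_add)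
      then show ?thesis by simp
    qed
    have "dir (f \<phi>) = (1 / (d \<phi> * r)) *\<^sub>R (N *v dir \<phi>)"
    proof -
      have ca: "cos (arctan q) = 1 / r" "sin (arctan q) = q / r"
        by (simp_all add: cos_arctan sin_arctan r_def)
      have "cos (f \<phi>) = cos a * cos (arctan q) - sin a * sin (arctan q)"
        by (simp add: f_def q_def cos_add)
      also have "\<dots> = (cos a - q * sin a) / r" unfolding ca using rpos by (simp add: field_simps)
      also have "\<dots> = v1 \<phi> / (d \<phi> * r)"
        unfolding id1 q_def using dnz rpos by (simp add: field_simps)
      finally have c1: "cos (f \<phi>) = v1 \<phi> / (d \<phi> * r)" .
      have "sin (f \<phi>) = sin a * cos (arctan q) + cos a * sin (arctan q)"
        by (simp add: f_def q_def sin_add)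
      also have "\<dots> = (sin a + q * cos a) / r" unfolding ca using rpos by (simp add: field_simps)
      also have "\<dots> = v2 \<phi> / (d \<phi> * r)"
        unfolding id2 q_def using dnz rpos by (simp add: field_simps)
      finally have c2: "sin (f \<phi>) = v2 \<phi> / (d \<phi> * r)" .
      show ?thesis using c1 c2 by (simp add: vec2_eq Nv)
    qed
    then have "M *v dir (f \<phi>) = (1 / (d \<phi> * r)) *\<^sub>R ((M ** N) *v dir \<phi>)"
      by (simp add: matrix_vector_mult_scaleR matrix_vector_mul_assoc)
    then have "mto M (f \<phi>) \<phi>" using N(1) by (auto simp: mto_def)
    then show "\<phi> \<in> C" using fin sub by (auto simp: pact_mto)
  qed
  then show ?thesis using d1(1) d2(1) by (auto simp: mem_interior intro!: exI[of _ "min \<delta>1 \<delta>2"])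
qed

lemma CH: "(V::real^2^2) ** V = mtr V *\<^sub>R V - det V *\<^sub>R mat 1"
  by (simp add: mat2_eq mm_c mat_c det_2 mtr_def algebra_simps)

lemma CHv: "(V::real^2^2) *v (V *v x) = mtr V *\<^sub>R (V *v x) - det V *\<^sub>R x"
  by (simp add: vec2_eq mv_c det_2 mtr_def algebra_simps)

lemma eig_root: assumes "V *v x = t *\<^sub>R x" "x \<noteq> 0"
  shows "t * t - mtr V * t + det V = 0"
proof -
  have "V *v (V *v x) = (t * t) *\<^sub>R x" using assms(1) by (simp add: matrix_vector_mult_scaleR)
  then have "(t * t) *\<^sub>R x = mtr V *\<^sub>R (t *\<^sub>R x) - det V *\<^sub>R x" using CHv[of V x] assms(1) by simp
  then have "(t * t - mtr V * t + det V) *\<^sub>R x = 0" by (simp add: algebra_simps)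
  then show ?thesis using assms(2) by simp
qed

lemma abs_eq_cases: "\<bar>(t::real)\<bar> = \<bar>m\<bar> \<Longrightarrow> m = t \<or> m = - t" by arith

lemma nonconf_prox: assumes "\<not> conformal A" shows "proximal A"
proof -
  define \<tau> where "\<tau> = mtr A"
  define \<delta> where "\<delta> = det A"
  define D where "D = \<tau> * \<tau> - 4 * \<delta>"
  show ?thesis
  proof (cases "D \<ge> 0")
    case True
    define l where "l = (\<tau> + sqrt D) / 2"
    define m where "m = (\<tau> - sqrt D) / 2"
    have lm: "l + m = \<tau>" "l * m = \<delta>"
      using True by (simp_all add: l_def m_def D_def field_simps power2_eq_square[symmetric])
    have "\<bar>l\<bar> \<noteq> \<bar>m\<bar>"
    proof
      assume h: "\<bar>l\<bar> = \<bar>m\<bar>"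
      have "complex_of_real l + complex_of_real m = complex_of_real (mtr A)"
        "complex_of_real l * complex_of_real m = complex_of_real (det A)"
        "cmod (complex_of_real l) = cmod (complex_of_real m)"
        using lm h by (simp_all add: \<tau>_def \<delta>_def flip: of_real_add of_real_mult)
      then show False using assms unfolding conformal_def by blast
    qed
    then show ?thesis using lm unfolding proximal_def \<tau>_def \<delta>_def by blast
  next
    case False
    define b where "b = sqrt (- D) / 2"
    define l where "l = Complex (\<tau> / 2) b"
    define m where "m = Complex (\<tau> / 2) (- b)"
    have sq: "sqrt (- D) * sqrt (- D) = - D" using False by simp
    have bb: "b * b = - D / 4" unfolding b_def using sq by (simp add: field_simps)
    have "l + m = complex_of_real (mtr A)" by (simp add: l_def m_def complex_eq_iff \<tau>_def)
    moreover have "l * m = complex_of_real (det A)"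
      using bb by (simp add: l_def m_def complex_eq_iff \<delta>_def D_def field_simps)
    moreover have "cmod l = cmod m" by (simp add: l_def m_def cmod_def)
    ultimately show ?thesis using assms unfolding conformal_def by blast
  qed
qed

fun pw :: "real^2^2 \<Rightarrow> nat \<Rightarrow> real^2^2" where
  "pw A 0 = mat 1"
| "pw A (Suc k) = A ** pw A k"

fun bs :: "real \<Rightarrow> real \<Rightarrow> nat \<Rightarrow> real" where
  "bs tr dt 0 = 0"
| "bs tr dt (Suc 0) = 1"
| "bs tr dt (Suc (Suc n)) = tr * bs tr dt (Suc n) - dt * bs tr dt n"

lemma bs_closed: assumes "l + m = tr" "l * m = dt"
  shows "bs tr dt n * (l - m) = l ^ n - m ^ n \<and> bs tr dt (Suc n) * (l - m) = l ^ Suc n - m ^ Suc n"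
proof (induction n)
  case 0 then show ?case by simp
next
  case (Suc n)
  then have h: "bs tr dt n * (l - m) = l ^ n - m ^ n" "bs tr dt (Suc n) * (l - m) = l ^ Suc n - m ^ Suc n"
    by auto
  have "bs tr dt (Suc (Suc n)) * (l - m) = tr * (bs tr dt (Suc n) * (l - m)) - dt * (bs tr dt n * (l - m))"
    by (simp add: algebra_simps)
  also have "\<dots> = (l + m) * (l ^ Suc n - m ^ Suc n) - (l * m) * (l ^ n - m ^ n)"
    by (simp only: h assms)
  also have "\<dots> = l ^ Suc (Suc n) - m ^ Suc (Suc n)"
    by (simp add: algebra_simps)
  finally show ?case using h by simp
qed

lemma pw_vec: "pw A (Suc n) *v v = (- det A * bs (mtr A) (det A) n) *\<^sub>R v + bs (mtr A) (det A) (Suc n) *\<^sub>R (A *v v)"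
proof (induction n)
  case 0 then show ?case by simp
next
  case (Suc n)
  have "pw A (Suc (Suc n)) *v v = A *v (pw A (Suc n) *v v)" by (simp add: matrix_vector_mul_assoc)
  also have "\<dots> = (- det A * bs (mtr A) (det A) n) *\<^sub>R (A *v v) + bs (mtr A) (det A) (Suc n) *\<^sub>R (A *v (A *v v))"
    unfolding Suc by (simp add: vec2_eq mv_c algebra_simps)
  also have "\<dots> = (- det A * bs (mtr A) (det A) (Suc n)) *\<^sub>R v + bs (mtr A) (det A) (Suc (Suc n)) *\<^sub>R (A *v v)"
    unfolding CHv by (simp add: algebra_simps)
  finally show ?case .
qed

lemma pw_fix: assumes "proximal A" "k \<ge> 1" "mto (pw A k) u u" shows "mto A u u"
proof (rule ccontr)
  assume nf: "\<not> mto A u u"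
  obtain l m where lm: "l + m = mtr A" "l * m = det A" "\<bar>l\<bar> \<noteq> \<bar>m\<bar>" using assms(1) by (auto simp: proximal_def)
  obtain n where n: "k = Suc n" using assms(2) by (cases k) auto
  obtain \<tau> where \<tau>: "pw A k *v dir u = \<tau> *\<^sub>R dir u" using assms(3) by (auto simp: mto_def)
  define \<beta> where "\<beta> = bs (mtr A) (det A) (Suc n)"
  have eq: "(- det A * bs (mtr A) (det A) n - \<tau>) *\<^sub>R dir u + \<beta> *\<^sub>R (A *v dir u) = 0"
    using \<tau> pw_vec[of A n "dir u"] n by (simp add: \<beta>_def algebra_simps)
  have "\<beta> = 0"
  proof (rule ccontr)
    assume "\<beta> \<noteq> 0"
    define X where "X = - det A * bs (mtr A) (det A) n - \<tau>"
    have "\<beta> *\<^sub>R (A *v dir u) = - (X *\<^sub>R dir u)"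
      using eq unfolding X_def[symmetric] by (simp add: add_eq_0_iff)
    then have "\<beta> *\<^sub>R (A *v dir u) = (- X) *\<^sub>R dir u" by simp
    then have "(1 / \<beta>) *\<^sub>R (\<beta> *\<^sub>R (A *v dir u)) = (1 / \<beta>) *\<^sub>R ((- X) *\<^sub>R dir u)" by simp
    then have "A *v dir u = (- X / \<beta>) *\<^sub>R dir u" using \<open>\<beta> \<noteq> 0\<close> by simp
    then show False using nf unfolding mto_def by blast
  qed
  then have "l ^ k = m ^ k" using bs_closed[OF lm(1,2), of n] n by (simp add: \<beta>_def)
  then have "\<bar>l\<bar> ^ k = \<bar>m\<bar> ^ k" by (metis power_abs)
  then have "\<bar>l\<bar> = \<bar>m\<bar>" using assms(2) by (simp add: power_eq_iff_eq_base)
  then show False using lm(3) by simp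
qed

lemma mto_pw_sym: "mto (pw A 0) u u" using mto_refl1 by simp

lemma scale_mm: "(c *\<^sub>R (X::real^2^2)) ** (d *\<^sub>R (Y::real^2^2)) = (c * d) *\<^sub>R (X ** Y)"
  by (simp add: mat2_eq mm_c algebra_simps)

lemma det_scale: "det (c *\<^sub>R (X::real^2^2)) = c * c * det X"
  by (simp add: det_2 algebra_simps)

lemma inv_scale: "c \<noteq> 0 \<Longrightarrow> invertible (X::real^2^2) \<Longrightarrow> invertible (c *\<^sub>R X)"
  by (simp add: invertible_det_nz det_scale)

lemma semigrp_left: "M \<in> semigrp B \<Longrightarrow> M \<in> B \<or> (\<exists>b\<in>B. \<exists>M'\<in>semigrp B. M = b ** M')"
proof (induction rule: semigrp.induct)
  case (base A) then show ?case by blast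
next
  case (mult A M)
  from mult.IH(1) show ?case
  proof
    assume "A \<in> B" then show ?thesis using mult.hyps(2) by blast
  next
    assume "\<exists>b\<in>B. \<exists>M'\<in>semigrp B. A = b ** M'"
    then obtain b M' where "b \<in> B" "M' \<in> semigrp B" "A = b ** M'" by blast
    moreover have "M' ** M \<in> semigrp B" using calculation(2) mult.hyps(2) by (rule semigrp.mult)
    moreover have "A ** M = b ** (M' ** M)" using calculation(3) by (simp add: matrix_mul_assoc)
    ultimately show ?thesis by blast
  qed
qed

lemma ker_par:
  fixes V :: "real^2^2"
  assumes "V \<noteq> t *\<^sub>R mat 1" "V *v v = t *\<^sub>R v" "V *v w = t *\<^sub>R w" "v \<noteq> 0"
  shows "\<exists>k. w = k *\<^sub>R v"
proof -
  define a where "a = V$1$1 - t"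
  define b where "b = V$1$2"
  define c where "c = V$2$1"
  define d where "d = V$2$2 - t"
  have e: "a * v$1 + b * v$2 = 0" "c * v$1 + d * v$2 = 0" "a * w$1 + b * w$2 = 0" "c * w$1 + d * w$2 = 0"
    using assms(2,3) by (auto simp: vec2_eq mv_c a_def b_def c_def d_def algebra_simps)
  have nz: "a \<noteq> 0 \<or> b \<noteq> 0 \<or> c \<noteq> 0 \<or> d \<noteq> 0"
    using assms(1) by (auto simp: mat2_eq mat_c a_def b_def c_def d_def)
  have f: "a * v$1 = - (b * v$2)" "c * v$1 = - (d * v$2)" "a * w$1 = - (b * w$2)" "c * w$1 = - (d * w$2)"
    using e by linarith+
  define x where "x = v$1 * w$2 - v$2 * w$1"
  have "a * x = (a * v$1) * w$2 - (a * w$1) * v$2" by (simp add: x_def algebra_simps)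
  then have xa: "a * x = 0" unfolding f by (simp add: algebra_simps)
  have "c * x = (c * v$1) * w$2 - (c * w$1) * v$2" by (simp add: x_def algebra_simps)
  then have xc: "c * x = 0" unfolding f by (simp add: algebra_simps)
  have g: "b * v$2 = - (a * v$1)" "d * v$2 = - (c * v$1)" "b * w$2 = - (a * w$1)" "d * w$2 = - (c * w$1)"
    using e by linarith+
  have "b * x = v$1 * (b * w$2) - w$1 * (b * v$2)" by (simp add: x_def algebra_simps)
  then have xb: "b * x = 0" unfolding g by (simp add: algebra_simps)
  have "d * x = v$1 * (d * w$2) - w$1 * (d * v$2)" by (simp add: x_def algebra_simps)
  then have xd: "d * x = 0" unfolding g by (simp add: algebra_simps)
  have x0: "x = 0" using nz xa xb xc xd by auto
  show ?thesis
  proof (cases "v$1 = 0")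
    case False
    have "w = (w$1 / v$1) *\<^sub>R v" using x0 False by (simp add: vec2_eq x_def field_simps)
    then show ?thesis by blast
  next
    case True
    then have "v$2 \<noteq> 0" using assms(4) by (auto simp: vec2_eq)
    have "w = (w$2 / v$2) *\<^sub>R v" using x0 True \<open>v$2 \<noteq> 0\<close> by (simp add: vec2_eq x_def field_simps)
    then show ?thesis by blast
  qed
qed

locale LS =
  fixes AA :: "(real^2^2) set" and C :: "real set"
  assumes inv: "\<forall>A\<in>AA. invertible A"
    and invar: "invariant AA C"
    and unst: "unstable_multicone AA C"
    and nopar: "\<forall>M\<in>semigrp AA. \<not> parabolic M"
begin

lemma mc: "multicone C" using unst by (simp add: unstable_multicone_def)
lemma perC: "per C" using multicone_props[OF mc] by simp
lemma closedC: "closed C" using multicone_props[OF mc] by simp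
lemma finS: "finite (frontier C \<inter> {0..<pi})" using multicone_props[OF mc] by simp
lemma front_C: "frontier C = C - interior C" by (simp add: frontier_def closure_closed closedC)

lemma AAsub: "A \<in> AA \<Longrightarrow> pact A C \<subseteq> C" using invar by (auto simp: invariant_def)

lemma semigrp_props: "M \<in> semigrp AA \<Longrightarrow> invertible M \<and> pact M C \<subseteq> C"
proof (induction rule: semigrp.induct)
  case (base A) then show ?case using inv AAsub by auto
next
  case (mult A M) then show ?case using invertible_mult pact_sub_comp by blast
qed

definition TT where "TT = {c *\<^sub>R V | c V. c > 0 \<and> V \<in> semigrp AA}"

lemma TT_props: "W \<in> TT \<Longrightarrow> invertible W \<and> pact W C \<subseteq> C"
proof -
  assume "W \<in> TT"
  then obtain c V where cV: "c > 0" "V \<in> semigrp AA" "W = c *\<^sub>R V" by (auto simp: TT_def)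
  have "pact W C = pact V C" using cV by (simp add: pact_mto mto_scale)
  then show ?thesis using semigrp_props[OF cV(2)] cV inv_scale by auto
qed

lemma TT_mult: "W \<in> TT \<Longrightarrow> W' \<in> TT \<Longrightarrow> W ** W' \<in> TT"
proof -
  assume "W \<in> TT" "W' \<in> TT"
  then obtain c V c' V' where "c > 0" "V \<in> semigrp AA" "W = c *\<^sub>R V"
    "c' > 0" "V' \<in> semigrp AA" "W' = c' *\<^sub>R V'" by (auto simp: TT_def)
  then have "W ** W' = (c * c') *\<^sub>R (V ** V')" "c * c' > 0" "V ** V' \<in> semigrp AA"
    by (simp_all add: scale_mm semigrp.mult)
  then show ?thesis unfolding TT_def by blast
qed

lemma AA_TT: "A \<in> AA \<Longrightarrow> A \<in> TT"
  unfolding TT_def by (rule CollectI, rule exI[of _ 1], rule exI[of _ A]) (auto intro: semigrp.base)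

lemma Fset_TT: "F \<in> Fset AA \<Longrightarrow> F \<in> TT"
  unfolding Fset_def
proof (induction rule: semigrp.induct)
  case (base F)
  then obtain A where A: "A \<in> conformal_part AA" "F = inverse (sqrt \<bar>det A\<bar>) *\<^sub>R A" by blast
  then have "A \<in> AA" by (simp add: conformal_part_def)
  then have "det A \<noteq> 0" using inv invertible_det_nz by blast
  then have "inverse (sqrt \<bar>det A\<bar>) > 0" by simp
  then show ?case using A(2) \<open>A \<in> AA\<close> unfolding TT_def by (blast intro: semigrp.base)
next
  case (mult A M) then show ?case using TT_mult by blast
qed

definition BB where "BB = {A ** F | A F. A \<in> AA - conformal_part AA \<and> F \<in> Fset AA}"

lemma semBB_TT: "W \<in> semigrp BB \<Longrightarrow> W \<in> TT"
proof (induction rule: semigrp.induct)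
  case (base W)
  then obtain A F where "A \<in> AA" "F \<in> Fset AA" "W = A ** F" by (auto simp: BB_def)
  then show ?case using TT_mult AA_TT Fset_TT by blast
next
  case (mult A M) then show ?case using TT_mult by blast
qed

lemma G: assumes "V \<in> semigrp AA" "proximal V" "u \<in> frontier C" "mto V u u" shows False
proof -
  obtain l m where lm: "l + m = mtr V" "l * m = det V" "\<bar>l\<bar> \<noteq> \<bar>m\<bar>"
    using assms(2) by (auto simp: proximal_def)
  obtain t where t: "V *v dir u = t *\<^sub>R dir u" using assms(4) by (auto simp: mto_def)
  have r: "t * t - mtr V * t + det V = 0" using eig_root[OF t dir_nz] .
  have "(t - l) * (t - m) = t * t - (l + m) * t + l * m" by (simp add: algebra_simps)
  then have "(t - l) * (t - m) = 0" using r lm by simp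
  then have tl: "t = l \<or> t = m" by simp
  define m' where "m' = mtr V - t"
  have tm: "t + m' = mtr V" "t * m' = det V" "\<bar>t\<bar> \<noteq> \<bar>m'\<bar>"
    using tl lm by (auto simp: m'_def lm(1)[symmetric] algebra_simps)
  have uC: "u \<in> C" using assms(3) front_C by auto
  consider "\<bar>t\<bar> > \<bar>m'\<bar>" | "\<bar>t\<bar> < \<bar>m'\<bar>" using tm(3) by linarith
  then show False
  proof cases
    case 1
    then have "u \<in> uspace V" using tm t unfolding uspace_def by blast
    then have "u \<in> Xu AA" unfolding Xu_def using assms(1,2)
      by (intro subsetD[OF closure_subset]) blast
    then show False using unst assms(3) by (auto simp: unstable_multicone_def)
  next
    case 2
    then have "u \<in> sspace V" using tm t unfolding sspace_def by blast
    then have "u \<in> Xs AA" unfolding Xs_def using assms(1,2)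
      by (intro subsetD[OF closure_subset]) blast
    then show False using unst uC by (auto simp: unstable_multicone_def)
  qed
qed

lemma G': assumes "V \<in> semigrp AA" "\<not> proximal V" "mto V u u"
  shows "\<exists>s. s \<noteq> 0 \<and> (V = s *\<^sub>R mat 1 \<or> V ** V = s *\<^sub>R mat 1)"
proof -
  have "invertible V" using semigrp_props[OF assms(1)] by simp
  then have dnz: "det V \<noteq> 0" by (simp add: invertible_det_nz)
  obtain t where t: "V *v dir u = t *\<^sub>R dir u" using assms(3) by (auto simp: mto_def)
  have r: "t * t - mtr V * t + det V = 0" using eig_root[OF t dir_nz] .
  define m' where "m' = mtr V - t"
  have tm: "t + m' = mtr V" "t * m' = det V" using r by (auto simp: m'_def algebra_simps)
  have "\<bar>t\<bar> = \<bar>m'\<bar>" using assms(2) tm unfolding proximal_def by blast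
  then have cs: "m' = t \<or> m' = - t" by (rule abs_eq_cases)
  have tnz: "t \<noteq> 0" using tm(2) dnz by auto
  show ?thesis
  proof (cases "m' = t")
    case True
    show ?thesis
    proof (cases "V = t *\<^sub>R mat 1")
      case True then show ?thesis using tnz by blast
    next
      case False
      have "parabolic V" unfolding parabolic_def
      proof (intro exI[of _ "dir u"] conjI allI impI)
        show "dir u \<noteq> 0" by (rule dir_nz)
        show "\<exists>l. V *v dir u = l *\<^sub>R dir u" using t by blast
        fix w :: "real^2" assume w: "w \<noteq> 0" "\<exists>m. V *v w = m *\<^sub>R w"
        then obtain \<mu> where \<mu>: "V *v w = \<mu> *\<^sub>R w" by blast
        have "\<mu> * \<mu> - mtr V * \<mu> + det V = 0" using eig_root[OF \<mu> w(1)] .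
        then have "(\<mu> - t) * (\<mu> - t) = 0" using tm True by (simp add: algebra_simps)
        then have "\<mu> = t" by simp
        then show "\<exists>k. w = k *\<^sub>R dir u" using ker_par[OF False t _ dir_nz] \<mu> by blast
      qed
      then show ?thesis using nopar assms(1) by blast
    qed
  next
    case False
    then have "m' = - t" using cs by simp
    then have "mtr V = 0" "det V = - (t * t)" using tm by auto
    then have "V ** V = (t * t) *\<^sub>R mat 1" using CH[of V] by simp
    moreover have "t * t \<noteq> 0" using tnz by simp
    ultimately show ?thesis by blast
  qed
qed

lemma scalar_case: assumes "Z \<in> semigrp BB" "Z = s *\<^sub>R mat 1" "s \<noteq> 0"
  shows "\<exists>A\<in>AA - conformal_part AA. pact A C = C"
proof -
  obtain A R where AR: "A \<in> AA - conformal_part AA" "R \<in> TT" "Z = A ** R"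
  proof -
    from semigrp_left[OF assms(1)] show ?thesis
    proof
      assume "Z \<in> BB"
      then obtain A F where "A \<in> AA - conformal_part AA" "F \<in> Fset AA" "Z = A ** F" by (auto simp: BB_def)
      then show ?thesis using that Fset_TT by blast
    next
      assume "\<exists>b\<in>BB. \<exists>M'\<in>semigrp BB. Z = b ** M'"
      then obtain b M' where bM: "b \<in> BB" "M' \<in> semigrp BB" "Z = b ** M'" by blast
      then obtain A F where "A \<in> AA - conformal_part AA" "F \<in> Fset AA" "b = A ** F" by (auto simp: BB_def)
      moreover have "F ** M' \<in> TT" using TT_mult Fset_TT semBB_TT calculation(2) bM(2) by blast
      ultimately show ?thesis using that bM(3) by (metis matrix_mul_assoc)
    qed
  qed
  have Rp: "invertible R" "pact R C \<subseteq> C" using TT_props[OF AR(2)] by auto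
  have pZ: "pact Z C = C" using pact_scalar[OF perC assms(3)] assms(2) by simp
  have "C \<subseteq> pact A C"
  proof
    fix y assume "y \<in> C"
    then obtain x where x: "x \<in> C" "mto (A ** R) x y" using pZ AR(3) by (auto simp: pact_mto)
    then obtain m where "mto R x m" "mto A m y" using mto_decomp[OF Rp(1)] by blast
    then show "y \<in> pact A C" using x Rp(2) by (auto simp: pact_mto)
  qed
  then have "pact A C = C" using AAsub AR(1) by blast
  then show ?thesis using AR(1) by blast
qed

lemma pw_sem: "A \<in> AA \<Longrightarrow> pw A (Suc k) \<in> semigrp AA"
proof (induction k)
  case 0 then show ?case by (simp add: semigrp.base)
next
  case (Suc k) then show ?case by (metis pw.simps(2) semigrp.base semigrp.mult)
qed

lemma H: assumes A: "A \<in> AA" "proximal A" and eqC: "pact A C = C" and p: "p \<in> frontier C"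
  shows False
proof -
  obtain N where N: "A ** N = mat 1" "N ** A = mat 1" using inv A(1) by (auto simp: invertible_def)
  have Ninv: "invertible N" using N unfolding invertible_def by blast
  have Ainv: "invertible A" using inv A(1) by blast
  have NC: "pact N C \<subseteq> C"
  proof
    fix \<phi> assume "\<phi> \<in> pact N C"
    then obtain \<theta> where \<theta>: "\<theta> \<in> C" "mto N \<theta> \<phi>" by (auto simp: pact_mto)
    then have "\<theta> \<in> pact A C" using eqC by simp
    then obtain \<psi> where \<psi>: "\<psi> \<in> C" "mto A \<psi> \<theta>" by (auto simp: pact_mto)
    have "mto N \<theta> \<psi>" using inv_mto[OF N \<psi>(2)] .
    then obtain k :: int where "\<psi> = \<phi> + of_int k * pi" using mto_unique[OF Ninv \<theta>(2)] by blast
    then have e: "\<phi> = \<psi> + of_int (- k) * pi" by simp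
    show "\<phi> \<in> C" unfolding e using \<psi>(1) per_iff[OF perC, of \<psi> "- k"] by blast
  qed
  have bd: "y \<in> frontier C" if "x \<in> frontier C" "mto A x y" for x y
  proof -
    have "y \<in> C" using that front_C AAsub[OF A(1)] by (auto simp: pact_mto)
    moreover have "y \<notin> interior C"
    proof
      assume "y \<in> interior C"
      then have "x \<in> interior C" using interior_pres[OF Ninv NC _ inv_mto[OF N that(2)]] by blast
      then show False using that(1) front_C by auto
    qed
    ultimately show ?thesis using front_C by auto
  qed
  define S where "S = frontier C \<inter> {0..<pi}"
  define stp where "stp u = rn (SOME y. mto A u y)" for u
  have stp: "mto A u (stp u)" for u
  proof -
    have "mto A u (SOME y. mto A u y)" using someI_ex[OF mto_ex[OF Ainv]] .
    then show ?thesis unfolding stp_def rn_def by (simp only: mto_shiftR)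
  qed
  define x where "x k = (stp ^^ k) (rn p)" for k
  have xS: "x k \<in> S" for k
  proof (induction k)
    case 0 then show ?case using rn_frontier[OF perC closedC p] by (simp add: x_def S_def)
  next
    case (Suc k)
    have "x (Suc k) = stp (x k)" by (simp add: x_def)
    moreover have "stp (x k) \<in> frontier C" using bd[OF _ stp] Suc by (auto simp: S_def)
    moreover have "stp (x k) \<in> {0..<pi}" using rn_range by (simp add: stp_def)
    ultimately show ?case by (simp add: S_def)
  qed
  have xm: "mto (pw A k) (x i) (x (i + k))" for i k
  proof (induction k)
    case 0 then show ?case using mto_refl1 by simp
  next
    case (Suc k)
    have "mto A (x (i + k)) (x (i + Suc k))" using stp[of "x (i+k)"] by (simp add: x_def)
    then show ?case using mto_comp[OF Suc] by simp
  qed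
  have "\<not> inj_on x {..card S}"
  proof
    assume "inj_on x {..card S}"
    moreover have "x ` {..card S} \<subseteq> S" using xS by auto
    moreover have "finite S" using finS by (simp add: S_def)
    ultimately have "card {..card S} \<le> card S" by (rule card_inj_on_le)
    then show False by simp
  qed
  then obtain i j where ij: "i \<noteq> j" "x i = x j" by (auto simp: inj_on_def)
  obtain a b where ab: "a < b" "x a = x b"
  proof (cases "i < j")
    case True then show ?thesis using that ij by blast
  next
    case False then have "j < i" using ij(1) by simp
    then show ?thesis using that ij by simp
  qed
  have e: "a + (b - a) = b" using ab(1) by simp
  have "mto (pw A (b - a)) (x a) (x (a + (b - a)))" by (rule xm)
  then have "mto (pw A (b - a)) (x a) (x a)" unfolding e using ab(2) by simp
  moreover have "b - a \<ge> 1" using ab(1) by simp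
  ultimately have "mto A (x a) (x a)" using pw_fix[OF A(2)] by blast
  then show False using G[OF semigrp.base[OF A(1)] A(2)] xS[of a] by (auto simp: S_def)
qed

lemma irrefl: assumes "W \<in> semigrp BB" "u \<in> frontier C" "mto W u u" shows False
proof -
  obtain c V where cV: "c > 0" "V \<in> semigrp AA" "W = c *\<^sub>R V"
    using semBB_TT[OF assms(1)] by (auto simp: TT_def)
  have Vu: "mto V u u" using assms(3) cV by (simp add: mto_scale)
  show False
  proof (cases "proximal V")
    case True then show False using G[OF cV(2) True assms(2) Vu] by blast
  next
    case False
    obtain s where s: "s \<noteq> 0" "V = s *\<^sub>R mat 1 \<or> V ** V = s *\<^sub>R mat 1" using G'[OF cV(2) False Vu] by blast
    have "\<exists>Z s'. Z \<in> semigrp BB \<and> s' \<noteq> 0 \<and> Z = s' *\<^sub>R mat 1"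
    proof (cases "V = s *\<^sub>R mat 1")
      case True
      then have "W = (c * s) *\<^sub>R mat 1" using cV by simp
      moreover have "c * s \<noteq> 0" using s cV by simp
      ultimately show ?thesis using assms(1) by blast
    next
      case False
      then have VV: "V ** V = s *\<^sub>R mat 1" using s by simp
      have "W ** W = (c * c) *\<^sub>R (V ** V)" using cV scale_mm by simp
      then have "W ** W = (c * c * s) *\<^sub>R mat 1" using VV by simp
      moreover have "W ** W \<in> semigrp BB" using assms(1) assms(1) by (rule semigrp.mult)
      moreover have "c * c * s \<noteq> 0" using s cV by simp
      ultimately show ?thesis by blast
    qed
    then obtain Z s' where "Z \<in> semigrp BB" "s' \<noteq> 0" "Z = s' *\<^sub>R mat 1" by blast
    then obtain A where A: "A \<in> AA - conformal_part AA" "pact A C = C" using scalar_case by blast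
    then have "proximal A" using nonconf_prox by (auto simp: conformal_part_def)
    then show False using H[of A u] A assms(2) by blast
  qed
qed

lemma alt_nil: "alt_prod [] [] = mat 1" by (simp add: alt_prod_def)
lemma alt_cons: "alt_prod (A # As) (F # Fs) = A ** F ** alt_prod As Fs" by (simp add: alt_prod_def)

lemma alt_props: "length As = length Fs \<Longrightarrow> set As \<subseteq> AA \<Longrightarrow> set Fs \<subseteq> Fset AA
  \<Longrightarrow> invertible (alt_prod As Fs) \<and> pact (alt_prod As Fs) C \<subseteq> C"
proof (induction As arbitrary: Fs)
  case Nil
  then have "Fs = []" by simp
  moreover have "pact (mat 1) C \<subseteq> C" using pact_scalar[OF perC, of 1] by simp
  ultimately show ?case by (simp add: alt_nil invertible_def)
next
  case (Cons A As)
  then obtain F Fs' where Fs: "Fs = F # Fs'" by (cases Fs) auto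
  have IH: "invertible (alt_prod As Fs') \<and> pact (alt_prod As Fs') C \<subseteq> C"
    using Cons by (auto simp: Fs)
  have "A ** F \<in> TT" using Cons Fs AA_TT Fset_TT TT_mult by auto
  then have "invertible (A ** F) \<and> pact (A ** F) C \<subseteq> C" by (rule TT_props)
  then show ?case using IH by (simp add: Fs alt_cons invertible_mult pact_sub_comp)
qed

definition EE where "EE u v \<longleftrightarrow> (\<exists>W\<in>semigrp BB. mto W v u)"

lemma mto_rnR: "mto M a (rn b) \<longleftrightarrow> mto M a b"
  unfolding rn_def by (simp only: mto_shiftR)

lemma chain: "length As = length Fs \<Longrightarrow> set As \<subseteq> AA - conformal_part AA \<Longrightarrow> set Fs \<subseteq> Fset AA
  \<Longrightarrow> x \<in> C \<Longrightarrow> mto (alt_prod As Fs) x y \<Longrightarrow> y \<in> frontier C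
  \<Longrightarrow> \<exists>ps. length ps = Suc (length As) \<and> hd ps = rn y \<and> set ps \<subseteq> frontier C \<inter> {0..<pi} \<and> sorted_wrt EE ps"
proof (induction As arbitrary: Fs y)
  case Nil
  then have "Fs = []" by simp
  then have "\<exists>k::int. y = x + of_int k * pi" using Nil by (simp add: alt_nil mto_mat1)
  show ?case using rn_frontier[OF perC closedC Nil(6)] by (intro exI[of _ "[rn y]"]) simp
next
  case (Cons A As)
  then obtain F Fs' where Fs: "Fs = F # Fs'" by (cases Fs) auto
  have len: "length As = length Fs'" and sA: "set As \<subseteq> AA - conformal_part AA" and sF: "set Fs' \<subseteq> Fset AA"
    and A: "A \<in> AA - conformal_part AA" and F: "F \<in> Fset AA"
    using Cons.prems by (auto simp: Fs)
  have Gp: "invertible (alt_prod As Fs') \<and> pact (alt_prod As Fs') C \<subseteq> C"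
    using alt_props[OF len] sA sF by auto
  have AFB: "A ** F \<in> BB" using A F by (auto simp: BB_def)
  have AFT: "A ** F \<in> TT" using AA_TT Fset_TT TT_mult A F by auto
  have AFp: "invertible (A ** F) \<and> pact (A ** F) C \<subseteq> C" using TT_props[OF AFT] .
  have "mto ((A ** F) ** alt_prod As Fs') x y" using Cons.prems(5) by (simp add: Fs alt_cons)
  then obtain z where z: "mto (alt_prod As Fs') x z" "mto (A ** F) z y"
    using mto_decomp Gp by blast
  have zC: "z \<in> C" using z(1) Gp Cons.prems(4) by (auto simp: pact_mto)
  have "z \<notin> interior C"
  proof
    assume "z \<in> interior C"
    then have "y \<in> interior C" using interior_pres[OF _ _ _ z(2)] AFp by blast
    then show False using Cons.prems(6) front_C by auto
  qed
  then have zf: "z \<in> frontier C" using zC front_C by auto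
  obtain ps where ps: "length ps = Suc (length As)" "hd ps = rn z" "set ps \<subseteq> frontier C \<inter> {0..<pi}"
    "sorted_wrt EE ps"
    using Cons.IH[OF len sA sF Cons.prems(4) z(1) zf] by blast
  then obtain ps' where ps': "ps = rn z # ps'" by (cases ps) auto
  have rzy: "mto (A ** F) (rn z) (rn y)" using z(2) by (simp add: mto_rn)
  have "\<forall>p\<in>set ps. EE (rn y) p"
  proof
    fix p assume "p \<in> set ps"
    then consider "p = rn z" | "p \<in> set ps'" using ps' by auto
    then show "EE (rn y) p"
    proof cases
      case 1 then show ?thesis using rzy AFB semigrp.base unfolding EE_def by blast
    next
      case 2
      then have "EE (rn z) p" using ps(4) ps' by simp
      then obtain W where W: "W \<in> semigrp BB" "mto W p (rn z)" by (auto simp: EE_def)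
      have "mto ((A ** F) ** W) p (rn y)" using mto_comp[OF W(2) rzy] .
      moreover have "(A ** F) ** W \<in> semigrp BB" using semigrp.base[OF AFB] W(1) by (rule semigrp.mult)
      ultimately show ?thesis unfolding EE_def by blast
    qed
  qed
  moreover have "rn y \<in> frontier C \<inter> {0..<pi}" using rn_frontier[OF perC closedC Cons.prems(6)] .
  ultimately show ?case using ps by (intro exI[of _ "rn y # ps"]) simp
qed

lemma sorted_distinct: "sorted_wrt R xs \<Longrightarrow> \<forall>x\<in>set xs. \<not> R x x \<Longrightarrow> distinct xs"
  by (induction xs) auto

lemma main: assumes "n \<ge> (nbdry C)^2 + 1" "length As = n" "length Fs = n"
  "set As \<subseteq> AA - conformal_part AA" "set Fs \<subseteq> Fset AA"
  shows "pact (alt_prod As Fs) C \<subseteq> interior C"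
proof
  fix y assume "y \<in> pact (alt_prod As Fs) C"
  then obtain x where x: "x \<in> C" "mto (alt_prod As Fs) x y" by (auto simp: pact_mto)
  have sAA: "set As \<subseteq> AA" using assms(4) by auto
  have yC: "y \<in> C" using x alt_props[OF _ sAA assms(5)] assms(2,3) by (auto simp: pact_mto)
  show "y \<in> interior C"
  proof (rule ccontr)
    assume "y \<notin> interior C"
    then have yf: "y \<in> frontier C" using yC front_C by auto
    define S where "S = frontier C \<inter> {0..<pi}"
    obtain ps where ps: "length ps = Suc n" "set ps \<subseteq> S" "sorted_wrt EE ps"
      using chain[OF _ assms(4,5) x yf] assms(2,3) unfolding S_def by metis
    have "\<forall>u\<in>set ps. \<not> EE u u"
    proof
      fix u assume "u \<in> set ps"
      then have "u \<in> frontier C" using ps(2) by (auto simp: S_def)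
      then show "\<not> EE u u" using irrefl unfolding EE_def by blast
    qed
    then have "distinct ps" using sorted_distinct ps(3) by blast
    then have "card (set ps) = Suc n" using ps(1) by (simp add: distinct_card)
    moreover have "card (set ps) \<le> card S" using ps(2) finS by (simp add: S_def card_mono)
    moreover have "card S = nbdry C" by (simp add: S_def nbdry_def)
    moreover have "nbdry C \<le> (nbdry C)^2" by (simp add: power2_eq_square le_square)
    ultimately show False using assms(1) by linarith
  qed
qed

end

theorem lemma3p8:
  fixes AA :: "(real^2^2) set" and C :: "real set"
  assumes "\<forall>A\<in>AA. invertible A"
    and "invariant AA C"
    and "unstable_multicone AA C"
    and "\<forall>M\<in>semigrp AA. \<not> parabolic M"
  shows "\<forall>n As Fs. n \<ge> (nbdry C)^2 + 1 \<longrightarrow> length As = n \<longrightarrow> length Fs = n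
           \<longrightarrow> set As \<subseteq> AA - conformal_part AA \<longrightarrow> set Fs \<subseteq> Fset AA
           \<longrightarrow> pact (alt_prod As Fs) C \<subseteq> interior C"
proof -
  interpret LS AA C using assms by unfold_locales
  show ?thesis using main by blast
qed

end
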